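(* Let $\mu$ be a global maximum point of $f$ and let $\nu_U$ be the law of $U_N(\sigma)=m_N(\sigma)-\mu$ when $\sigma$ has law $\rho_\mu^{\otimes N}$. There exists $\widehat B>0$, depending only on $\rho$ (and $J,h$), such that for every $B\in(0,\widehat B)$, every $a\in(0,B/2)$, every $r\in\mathbb{R}$ and every $\gamma\in\mathbb{R}$ there is $\bar\delta=\bar\delta(a,B)>0$ with, as $N\to\infty$, $$\int_{\mathbb{R}}\exp\Big(irN^\gamma w-\frac{NJ}{2}w^2\Big)\int_{|u|\le a}\exp(NJuw)\,d\nu_U(u)\,dw=\int_{|w|\le B}\exp\Big(irN^\gamma w-\frac{NJ}{2}w^2\Big)\int_{\mathbb{R}}\exp(NJuw)\,d\nu_U(u)\,dw+O(e^{-N\bar\delta}).$$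
   Context: Let $\rho$ be a non-degenerate Borel probability measure on $\mathbb{R}$ such that $\int_{\mathbb{R}}\exp\big(\tfrac{a x^2}{2}+bx\big)\,d\rho(x)<\infty$ for all $a>0$, $b\in\mathbb{R}$. Fix $J>0$ and $h\in\mathbb{R}$. Define $f(x)=-\frac{J}{2}x^2+\ln\int_{\mathbb{R}}\exp\big(s(Jx+h)\big)\,d\rho(s)$. For $x\in\mathbb{R}$ let $\rho_x$ be the probability measure $d\rho_x(s)=\dfrac{\exp(s(Jx+h))\,d\rho(s)}{\int_{\mathbb{R}}\exp(t(Jx+h))\,d\rho(t)}$. For $\sigma\in\mathbb{R}^N$, $m_N(\sigma)=\frac1N\sum_{i=1}^N\sigma_i$. *)

theory Defs
  imports "HOL-Probability.Probability"
begin

definition fCW :: "real measure \<Rightarrow> real \<Rightarrow> real \<Rightarrow> real \<Rightarrow> real" where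
  "fCW \<rho> J h x = - (J / 2) * x\<^sup>2 + ln (\<integral>s. exp (s * (J * x + h)) \<partial>\<rho>)"

definition tilted :: "real measure \<Rightarrow> real \<Rightarrow> real \<Rightarrow> real \<Rightarrow> real measure" where
  "tilted \<rho> J h x =
     density \<rho> (\<lambda>s. ennreal (exp (s * (J * x + h)) / (\<integral>t. exp (t * (J * x + h)) \<partial>\<rho>)))"

definition mN :: "nat \<Rightarrow> (nat \<Rightarrow> real) \<Rightarrow> real" where
  "mN N \<sigma> = (\<Sum>i<N. \<sigma> i) / real N"

definition nuU :: "real measure \<Rightarrow> real \<Rightarrow> real \<Rightarrow> real \<Rightarrow> nat \<Rightarrow> real measure" where
  "nuU \<rho> J h \<mu> N =
     distr (PiM {..<N} (\<lambda>_. tilted \<rho> J h \<mu>)) lborel (\<lambda>\<sigma>. mN N \<sigma> - \<mu>)"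

end

theory Submission
  imports Defs
begin



lemma gauss_integrable:
  fixes c :: real assumes c: "c > 0"
  shows "integrable lborel (\<lambda>w. exp (- c * w\<^sup>2))"
proof -
  define \<sigma> where "\<sigma> = 1 / sqrt (2 * c)"
  have s2: "\<sigma>\<^sup>2 = 1 / (2*c)" using c by (simp add: \<sigma>_def power_divide)
  have "\<sigma> \<noteq> 0" using c by (simp add: \<sigma>_def)
  have "integrable lborel (\<lambda>w. sqrt (2 * pi * \<sigma>\<^sup>2) * normal_density 0 \<sigma> w)"
    using c by (intro integrable_mult_right integrable_normal_density) (simp add: \<sigma>_def)
  moreover have "(\<lambda>w. sqrt (2 * pi * \<sigma>\<^sup>2) * normal_density 0 \<sigma> w) = (\<lambda>w. exp (- c * w\<^sup>2))"
  proof
    fix w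
    have "sqrt (2 * pi * \<sigma>\<^sup>2) > 0" using c s2 by simp
    moreover have "-(w - 0)\<^sup>2/ (2 * \<sigma>\<^sup>2) = - c * w\<^sup>2" using c s2 by simp
    ultimately show "sqrt (2 * pi * \<sigma>\<^sup>2) * normal_density 0 \<sigma> w = exp (- c * w\<^sup>2)"
      unfolding normal_density_def using s2 c \<open>\<sigma> \<noteq> 0\<close> by simp
  qed
  ultimately show ?thesis by simp
qed

lemma gauss_abs_integrable:
  fixes c b :: real assumes c: "c > 0"
  shows "integrable lborel (\<lambda>w. exp (- c * w\<^sup>2 + b * \<bar>w\<bar>))"
proof (rule Bochner_Integration.integrable_bound[where f="\<lambda>w. exp (b\<^sup>2 / (2*c)) * exp (- (c/2) * w\<^sup>2)"])
  show "integrable lborel (\<lambda>w. exp (b\<^sup>2 / (2*c)) * exp (- (c/2) * w\<^sup>2))"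
    using gauss_integrable[of "c/2"] c by simp
  show "(\<lambda>w. exp (- c * w\<^sup>2 + b * \<bar>w\<bar>)) \<in> borel_measurable lborel" by measurable
  show "AE x in lborel. norm (exp (- c * x\<^sup>2 + b * \<bar>x\<bar>)) \<le> norm (exp (b\<^sup>2 / (2*c)) * exp (- (c/2) * x\<^sup>2))"
  proof (rule AE_I2)
    fix x
    have "0 \<le> (c * \<bar>x\<bar> - b)\<^sup>2 / (2*c)" using c by simp
    hence "- c * x\<^sup>2 + b * \<bar>x\<bar> \<le> b\<^sup>2 / (2*c) + - (c/2) * x\<^sup>2"
      using c by (simp add: field_simps power2_eq_square)
    thus "norm (exp (- c * x\<^sup>2 + b * \<bar>x\<bar>)) \<le> norm (exp (b\<^sup>2 / (2*c)) * exp (- (c/2) * x\<^sup>2))"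
      by (simp add: exp_add[symmetric])
  qed
qed

lemma powser_isolated_zero:
  fixes c :: "nat \<Rightarrow> real"
  assumes sums: "\<And>s. (\<lambda>k. c k * s^k) sums F s"
    and nz: "\<exists>k. c k \<noteq> 0"
  shows "\<exists>\<epsilon>>0. \<forall>s. 0 < \<bar>s\<bar> \<and> \<bar>s\<bar> < \<epsilon> \<longrightarrow> F s \<noteq> 0"
proof -
  define k where "k = (LEAST k. c k \<noteq> 0)"
  have ck: "c k \<noteq> 0" unfolding k_def by (rule LeastI_ex[OF nz])
  have cj: "c j = 0" if "j < k" for j using not_less_Least[of j "\<lambda>k. c k \<noteq> 0"] that
    unfolding k_def by blast
  define H where "H s = (\<Sum>n. c (n+k) * s^n)" for s
  have shift: "(\<lambda>n. c (n+k) * s^n) sums (F s / s^k)" if "s \<noteq> 0" for s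
  proof -
    have "(\<lambda>n. c (n+k) * s^(n+k)) sums (F s - (\<Sum>i<k. c i * s^i))"
      using sums_split_initial_segment[OF sums[of s], of k] by simp
    also have "(\<Sum>i<k. c i * s^i) = 0" using cj by simp
    finally have "(\<lambda>n. c (n+k) * s^(n+k) / s^k) sums (F s / s^k)"
      by (intro sums_divide) simp
    moreover have "(\<lambda>n. c (n+k) * s^(n+k) / s^k) = (\<lambda>n. c (n+k) * s^n)"
      using that by (simp add: power_add)
    ultimately show ?thesis by simp
  qed
  have summ: "summable (\<lambda>n. c (n+k) * y^n)" for y
  proof (cases "y = 0")
    case True thus ?thesis by simp
  next
    case False thus ?thesis using shift[OF False] by (simp add: sums_iff)
  qed
  have cont: "isCont H 0" unfolding H_def by (rule isCont_powser_converges_everywhere[OF summ])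
  have H0: "H 0 = c k" unfolding H_def using powser_zero[of "\<lambda>n. c (n+k)"] by simp
  have "H \<midarrow>0\<rightarrow> c k" using cont H0 by (simp add: isCont_def)
  from LIM_fun_not_zero[OF this ck] obtain r where r: "0 < r"
    "\<forall>x. x \<noteq> 0 \<and> \<bar>0 - x\<bar> < r \<longrightarrow> H x \<noteq> 0" by blast
  show ?thesis
  proof (intro exI[of _ r] conjI allI impI)
    fix s assume s: "0 < \<bar>s\<bar> \<and> \<bar>s\<bar> < r"
    hence "H s \<noteq> 0" using r by auto
    moreover have "H s = F s / s^k" using shift[of s] s unfolding H_def by (auto simp: sums_iff)
    ultimately show "F s \<noteq> 0" by auto
  qed (fact r)
qed




locale cw =
  fixes \<rho> :: "real measure" and J h \<mu> :: real
  assumes rho_sets: "sets \<rho> = sets borel"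
    and rho_prob: "prob_space \<rho>"
    and rho_mom: "\<forall>a>0. \<forall>b. integrable \<rho> (\<lambda>x. exp (a * x\<^sup>2 / 2 + b * x))"
    and J_pos: "J > 0"
    and mu_max: "\<forall>x. fCW \<rho> J h x \<le> fCW \<rho> J h \<mu>"
begin

interpretation R: prob_space \<rho> by (rule rho_prob)

lemma space_rho: "space \<rho> = UNIV"
  using sets_eq_imp_space_eq[OF rho_sets] by simp

lemma meas_rho: "f \<in> borel_measurable borel \<Longrightarrow> f \<in> borel_measurable \<rho>"
  by (subst measurable_cong_sets[OF rho_sets refl]) assumption

lemma int_quad: "c > 0 \<Longrightarrow> integrable \<rho> (\<lambda>x. exp (c * x\<^sup>2 + b * x))"
  using rho_mom[rule_format, of "2*c" b] by simp

lemma int_lin: "integrable \<rho> (\<lambda>x. exp (x * t))"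
proof (rule Bochner_Integration.integrable_bound[where f="\<lambda>x. exp ((1/2) * x\<^sup>2 + t * x)"])
  show "integrable \<rho> (\<lambda>x. exp ((1/2) * x\<^sup>2 + t * x))" by (rule int_quad) simp
  show "(\<lambda>x. exp (x * t)) \<in> borel_measurable \<rho>" by (rule meas_rho) measurable
  show "AE x in \<rho>. norm (exp (x * t)) \<le> norm (exp ((1/2) * x\<^sup>2 + t * x))"
    by (intro AE_I2) (simp add: mult.commute)
qed

definition Z :: "real \<Rightarrow> real" where "Z t = (\<integral>s. exp (s * t) \<partial>\<rho>)"

lemma Z_pos: "Z t > 0"
proof -
  have "(\<integral>s. 0 \<partial>\<rho>) < (\<integral>s. exp (s * t) \<partial>\<rho>)"
    by (rule R.integral_less_AE_space) (auto intro: int_lin simp: R.emeasure_space_1)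
  thus ?thesis by (simp add: Z_def)
qed

definition \<theta> where "\<theta> = J * \<mu> + h"
definition Z0 where "Z0 = Z \<theta>"
definition dens where "dens x = exp (x * \<theta>) / Z0"

lemma Z0_pos: "Z0 > 0" by (simp add: Z0_def Z_pos)

definition P where "P = tilted \<rho> J h \<mu>"

lemma P_def': "P = density \<rho> (\<lambda>x. ennreal (dens x))"
  unfolding P_def tilted_def dens_def Z0_def Z_def \<theta>_def ..

lemma dens_meas[measurable]: "dens \<in> borel_measurable \<rho>"
  unfolding dens_def by (rule meas_rho) measurable

lemma dens_nonneg: "0 \<le> dens x" using Z0_pos by (simp add: dens_def)

lemma sets_P: "sets P = sets borel" by (simp add: P_def' rho_sets)
lemma space_P: "space P = UNIV" using sets_eq_imp_space_eq[OF sets_P] by simp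

lemma intP: "g \<in> borel_measurable borel \<Longrightarrow> integrable P g \<longleftrightarrow> integrable \<rho> (\<lambda>x. dens x * g x)"
  unfolding P_def' by (subst integrable_density) (auto intro: meas_rho simp: dens_nonneg)

lemma integralP: "g \<in> borel_measurable borel \<Longrightarrow> (\<integral>x. g x \<partial>P) = (\<integral>x. dens x * g x \<partial>\<rho>)"
  unfolding P_def' by (subst integral_density) (auto intro: meas_rho simp: dens_nonneg)

lemma int_dens: "integrable \<rho> dens"
  unfolding dens_def by (intro integrable_divide int_lin)

lemma integral_dens: "(\<integral>x. dens x \<partial>\<rho>) = 1"
  using Z0_pos unfolding dens_def by (simp add: Z0_def Z_def)

lemma prob_P: "prob_space P"
proof
  have "emeasure P (space P) = (\<integral>\<^sup>+x. ennreal (dens x) \<partial>\<rho>)"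
    unfolding P_def' by (subst emeasure_density) (auto simp: space_rho intro: sets.top[of \<rho>, unfolded space_rho])
  also have "\<dots> = ennreal (\<integral>x. dens x \<partial>\<rho>)"
    by (rule nn_integral_eq_integral[OF int_dens]) (simp add: dens_nonneg)
  finally show "emeasure P (space P) = 1" by (simp add: integral_dens)
qed

end



context cw begin

interpretation R: prob_space \<rho> by (rule rho_prob)
interpretation PP: prob_space P by (rule prob_P)

definition Mf :: "real \<Rightarrow> real" where "Mf s = (\<integral>x. exp (s * (x - \<mu>)) \<partial>P)"

lemma dens_exp: "dens x * exp (s * (x - \<mu>)) = (exp (- s * \<mu>) / Z0) * exp (x * (\<theta> + s))"
  by (simp add: dens_def field_simps exp_add[symmetric] exp_diff)

lemma Mf_int: "integrable P (\<lambda>x. exp (s * (x - \<mu>)))"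
  by (subst intP) (simp_all add: dens_exp int_lin)

lemma Mf_eq: "Mf s = exp (- s * \<mu>) * Z (\<theta> + s) / Z0"
  unfolding Mf_def by (subst integralP) (simp_all add: dens_exp Z_def)

lemma Mf_pos: "Mf s > 0"
  using Z_pos Z0_pos by (simp add: Mf_eq)

lemma Mf_le: "Mf s \<le> exp (s\<^sup>2 / (2*J))"
proof -
  have "fCW \<rho> J h (\<mu> + s/J) \<le> fCW \<rho> J h \<mu>" using mu_max by blast
  moreover have "J * (\<mu> + s/J) + h = \<theta> + s" using J_pos by (simp add: \<theta>_def field_simps)
  ultimately have "- (J/2) * (\<mu> + s/J)\<^sup>2 + ln (Z (\<theta> + s)) \<le> - (J/2) * \<mu>\<^sup>2 + ln Z0"
    unfolding fCW_def Z_def Z0_def \<theta>_def by simp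
  moreover have "(J/2) * (\<mu> + s/J)\<^sup>2 = (J/2) * \<mu>\<^sup>2 + s * \<mu> + s\<^sup>2/(2*J)"
    using J_pos by (simp add: power2_eq_square field_simps)
  ultimately have "ln (Z (\<theta> + s)) \<le> ln Z0 + s * \<mu> + s\<^sup>2/(2*J)"
    by linarith
  hence "Z (\<theta> + s) \<le> exp (ln Z0 + s * \<mu> + s\<^sup>2/(2*J))"
    using Z_pos by (metis exp_le_cancel_iff exp_ln)
  hence "Z (\<theta> + s) \<le> Z0 * exp (s * \<mu>) * exp (s\<^sup>2/(2*J))"
    using Z0_pos by (simp add: exp_add)
  hence "exp (- s * \<mu>) * Z (\<theta> + s) / Z0 \<le> exp (- s * \<mu>) * (Z0 * exp (s * \<mu>) * exp (s\<^sup>2/(2*J))) / Z0"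
    using Z0_pos by (intro divide_right_mono mult_left_mono) auto
  also have "\<dots> = exp (s\<^sup>2/(2*J))" using Z0_pos by (simp add: exp_minus field_simps)
  finally show ?thesis by (simp add: Mf_eq)
qed


end



lemma exp_partial_le: "(\<Sum>n<m. \<bar>y\<bar>^n /\<^sub>R fact n) \<le> exp y + exp (- y)" for y :: real
proof -
  have "(\<Sum>n<m. \<bar>y\<bar>^n /\<^sub>R fact n) \<le> (\<Sum>n. \<bar>y\<bar>^n /\<^sub>R fact n)"
    by (rule sum_le_suminf[OF summable_exp_generic]) auto
  also have "\<dots> = exp \<bar>y\<bar>" using exp_converges[of "\<bar>y\<bar>"] by (simp add: sums_iff)
  also have "\<dots> \<le> exp y + exp (- y)" by (cases "y \<ge> 0") auto
  finally show ?thesis .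
qed

lemma exp_term_le: "\<bar>y\<bar>^k /\<^sub>R fact k \<le> exp y + exp (- y)" for y :: real
proof -
  have "\<bar>y\<bar>^k /\<^sub>R fact k = (\<Sum>n\<in>{k}. \<bar>y\<bar>^n /\<^sub>R fact n)" by simp
  also have "\<dots> \<le> (\<Sum>n. \<bar>y\<bar>^n /\<^sub>R fact n)"
    by (rule sum_le_suminf[OF summable_exp_generic]) auto
  also have "\<dots> = exp \<bar>y\<bar>" using exp_converges[of "\<bar>y\<bar>"] by (simp add: sums_iff)
  also have "\<dots> \<le> exp y + exp (- y)" by (cases "y \<ge> 0") auto
  finally show ?thesis .
qed

context cw begin

interpretation R: prob_space \<rho> by (rule rho_prob)
interpretation PP: prob_space P by (rule prob_P)

definition mom :: "nat \<Rightarrow> real" where "mom k = (\<integral>x. (x - \<mu>)^k \<partial>P)"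

lemma meas_P: "f \<in> borel_measurable borel \<Longrightarrow> f \<in> borel_measurable P"
  by (subst measurable_cong_sets[OF sets_P refl]) assumption

lemma int_bound2: "integrable P (\<lambda>x. exp (s * (x - \<mu>)) + exp (- (s * (x - \<mu>))))"
  using Mf_int[of s] Mf_int[of "-s"] by (intro Bochner_Integration.integrable_add) auto

lemma int_pow: "integrable P (\<lambda>x. (s*(x-\<mu>))^k /\<^sub>R fact k)"
proof (rule Bochner_Integration.integrable_bound[OF int_bound2[of s]])
  show "(\<lambda>x. (s*(x-\<mu>))^k /\<^sub>R fact k) \<in> borel_measurable P" by (rule meas_P) measurable
  show "AE x in P. norm ((s*(x-\<mu>))^k /\<^sub>R fact k) \<le> norm (exp (s * (x - \<mu>)) + exp (- (s * (x - \<mu>))))"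
  proof (rule AE_I2)
    fix x
    have "norm ((s*(x-\<mu>))^k /\<^sub>R fact k) = \<bar>s*(x-\<mu>)\<bar>^k /\<^sub>R fact k"
      by (simp add: power_abs abs_mult)
    also have "\<dots> \<le> exp (s * (x - \<mu>)) + exp (- (s * (x - \<mu>)))" by (rule exp_term_le)
    finally show "norm ((s*(x-\<mu>))^k /\<^sub>R fact k) \<le> norm (exp (s * (x - \<mu>)) + exp (- (s * (x - \<mu>))))"
      by simp
  qed
qed

lemma Mf_sums: "(\<lambda>k. (mom k / fact k) * s^k) sums Mf s"
proof -
  let ?f = "\<lambda>k x. (s*(x-\<mu>))^k /\<^sub>R fact k"
  have norm_eq: "norm (?f k x) = \<bar>s*(x-\<mu>)\<bar>^k /\<^sub>R fact k" for k x
    by (simp add: power_abs abs_mult)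
  have sm: "summable (\<lambda>k. \<integral>x. norm (?f k x) \<partial>P)"
  proof (rule summableI_nonneg_bounded)
    show "0 \<le> (\<integral>x. norm (?f k x) \<partial>P)" for k by simp
    fix n
    have "(\<Sum>k<n. \<integral>x. norm (?f k x) \<partial>P) = (\<integral>x. (\<Sum>k<n. norm (?f k x)) \<partial>P)"
      by (rule Bochner_Integration.integral_sum[symmetric]) (intro integrable_norm int_pow)
    also have "\<dots> \<le> (\<integral>x. exp (s * (x - \<mu>)) + exp (- (s * (x - \<mu>))) \<partial>P)"
      by (intro integral_mono int_bound2 Bochner_Integration.integrable_sum integrable_norm int_pow)
         (simp only: norm_eq exp_partial_le)
    finally show "(\<Sum>k<n. \<integral>x. norm (?f k x) \<partial>P) \<le> (\<integral>x. exp (s * (x - \<mu>)) + exp (- (s * (x - \<mu>))) \<partial>P)" .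
  qed
  have "(\<lambda>k. integral\<^sup>L P (?f k)) sums (\<integral>x. (\<Sum>k. ?f k x) \<partial>P)"
  proof (rule sums_integral)
    show "integrable P (?f k)" for k by (rule int_pow)
    show "AE x in P. summable (\<lambda>k. norm (?f k x))"
      by (intro AE_I2) (simp only: norm_eq summable_exp_generic)
  qed (fact sm)
  moreover have "(\<Sum>k. ?f k x) = exp (s * (x - \<mu>))" for x
    using exp_converges[of "s*(x-\<mu>)"] by (simp add: sums_iff)
  moreover have "integral\<^sup>L P (?f k) = (mom k / fact k) * s^k" for k
    by (simp add: mom_def power_mult_distrib divide_inverse mult_ac)
  ultimately show ?thesis by (simp add: Mf_def)
qed

lemma Mf_cont: "isCont Mf s"
proof -
  have "Mf = (\<lambda>s. \<Sum>k. (mom k / fact k) * s^k)"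
    using Mf_sums by (auto simp: sums_iff)
  moreover have "isCont (\<lambda>s. \<Sum>k. (mom k / fact k) * s^k) s"
    by (rule isCont_powser_converges_everywhere) (use Mf_sums sums_summable in blast)
  ultimately show ?thesis by simp
qed

end



context cw begin

interpretation R: prob_space \<rho> by (rule rho_prob)
interpretation PP: prob_space P by (rule prob_P)

definition gco :: "nat \<Rightarrow> real" where
  "gco k = (if even k then (1/(2*J))^(k div 2) / fact (k div 2) else 0)"

lemma gco_eq: "(\<lambda>n. gco (2*n) * s^(2*n)) = (\<lambda>n. (s\<^sup>2/(2*J))^n /\<^sub>R fact n)"
proof
  fix n
  have "s^(2*n) = (s\<^sup>2)^n" by (simp add: power_mult)
  thus "gco (2*n) * s^(2*n) = (s\<^sup>2/(2*J))^n /\<^sub>R fact n"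
    by (simp add: gco_def power_divide field_simps)
qed
lemma G_sums: "(\<lambda>k. gco k * s^k) sums exp (s\<^sup>2/(2*J))"
proof -
  have "(\<lambda>n. gco (2*n) * s^(2*n)) sums exp (s\<^sup>2/(2*J))"
    unfolding gco_eq by (rule exp_converges)
  moreover have "strict_mono (\<lambda>n::nat. 2*n)" by (simp add: strict_mono_def)
  moreover have "gco k * s^k = 0" if "k \<notin> range (\<lambda>n::nat. 2*n)" for k
  proof -
    have "odd k" using that by (auto elim!: evenE)
    thus ?thesis by (simp add: gco_def)
  qed
  ultimately show ?thesis
    using sums_mono_reindex[of "\<lambda>n. 2*n" "\<lambda>k. gco k * s^k"] by simp
qed

lemma int_sq: "integrable P (\<lambda>x. exp (J * (x - \<mu>)\<^sup>2))"
proof (subst intP)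
  show "(\<lambda>x. exp (J * (x - \<mu>)\<^sup>2)) \<in> borel_measurable borel" by measurable
  have "(\<lambda>x. dens x * exp (J * (x - \<mu>)\<^sup>2)) = (\<lambda>x. (exp (J*\<mu>\<^sup>2) / Z0) * exp (J * x\<^sup>2 + (\<theta> - 2*J*\<mu>) * x))"
    by (rule ext) (simp add: dens_def exp_add[symmetric] power2_eq_square field_simps)
  moreover have "integrable \<rho> (\<lambda>x. (exp (J*\<mu>\<^sup>2) / Z0) * exp (J * x\<^sup>2 + (\<theta> - 2*J*\<mu>) * x))"
    by (intro integrable_mult_right int_quad J_pos)
  ultimately show "integrable \<rho> (\<lambda>x. dens x * exp (J * (x - \<mu>)\<^sup>2))" by simp
qed

lemma sq_ident: fixes K s y :: real assumes "K > 0" shows "(2*K*y - s)\<^sup>2 / (4*K) = K*y\<^sup>2 - s*y + s\<^sup>2/(4*K)"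
  using assms by (simp add: power2_eq_square field_simps)

lemma Mf_not_gauss: "\<not> (\<forall>s. Mf s = exp (s\<^sup>2/(2*J)))"
proof
  assume eq: "\<forall>s. Mf s = exp (s\<^sup>2/(2*J))"
  define E where "E = (\<integral>x. exp (J * (x - \<mu>)\<^sup>2) \<partial>P)"
  have le: "Mf s \<le> exp (s\<^sup>2/(4*J)) * E" for s
  proof -
    have "Mf s \<le> (\<integral>x. exp (s\<^sup>2/(4*J)) * exp (J * (x - \<mu>)\<^sup>2) \<partial>P)"
      unfolding Mf_def
    proof (intro integral_mono Mf_int integrable_mult_right int_sq)
      fix x
      have "0 \<le> (2*J*(x-\<mu>) - s)\<^sup>2 / (4*J)" using J_pos by simp
      hence "s * (x - \<mu>) \<le> s\<^sup>2/(4*J) + J * (x - \<mu>)\<^sup>2"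
        unfolding sq_ident[OF J_pos] by linarith
      hence "exp (s * (x - \<mu>)) \<le> exp (s\<^sup>2/(4*J) + J * (x - \<mu>)\<^sup>2)" by simp
      thus "exp (s * (x - \<mu>)) \<le> exp (s\<^sup>2/(4*J)) * exp (J * (x - \<mu>)\<^sup>2)"
        by (simp only: exp_add)
    qed
    thus ?thesis by (simp add: E_def)
  qed
  define s where "s = sqrt (4*J*\<bar>E\<bar>)"
  have s2: "s\<^sup>2/(4*J) = \<bar>E\<bar>" using J_pos by (simp add: s_def)
  have s2': "s\<^sup>2/(2*J) = \<bar>E\<bar> + \<bar>E\<bar>" using J_pos by (simp add: s_def)
  have "Mf s = exp (s\<^sup>2/(2*J))" using eq by blast
  also have "\<dots> = exp (\<bar>E\<bar> + \<bar>E\<bar>)" by (simp only: s2')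
  also have "\<dots> = exp \<bar>E\<bar> * exp \<bar>E\<bar>" by (simp only: exp_add)
  finally have "Mf s = exp \<bar>E\<bar> * exp \<bar>E\<bar>" .
  moreover have "Mf s \<le> exp \<bar>E\<bar> * E" using le[of s] s2 by simp
  ultimately have "exp \<bar>E\<bar> * exp \<bar>E\<bar> \<le> exp \<bar>E\<bar> * E" by simp
  hence "exp \<bar>E\<bar> \<le> E" by simp
  moreover have "1 + \<bar>E\<bar> \<le> exp \<bar>E\<bar>" by (rule exp_ge_add_one_self)
  ultimately show False by linarith
qed

lemma Mf_isolated: "\<exists>\<epsilon>>0. \<forall>s. 0 < \<bar>s\<bar> \<and> \<bar>s\<bar> < \<epsilon> \<longrightarrow> Mf s < exp (s\<^sup>2/(2*J))"
proof -
  define c where "c = (\<lambda>k. mom k / fact k - gco k)"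
  define F where "F = (\<lambda>s. Mf s - exp (s\<^sup>2/(2*J)))"
  have sums: "(\<lambda>k. c k * s^k) sums F s" for s
  proof -
    have "(\<lambda>k. (mom k / fact k) * s^k - gco k * s^k) sums (Mf s - exp (s\<^sup>2/(2*J)))"
      by (intro sums_diff Mf_sums G_sums)
    moreover have "(\<lambda>k. (mom k / fact k) * s^k - gco k * s^k) = (\<lambda>k. c k * s^k)"
      by (rule ext) (simp add: c_def left_diff_distrib)
    ultimately show ?thesis by (simp add: F_def)
  qed
  have "\<exists>k. c k \<noteq> 0"
  proof (rule ccontr)
    assume A: "\<not> (\<exists>k. c k \<noteq> 0)"
    have "F s = 0" for s
    proof -
      have "(\<lambda>k. c k * s^k) = (\<lambda>k. 0)" using A by auto
      hence "(\<lambda>k. 0::real) sums F s" using sums[of s] by simp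
      thus ?thesis using sums_zero sums_unique2 by blast
    qed
    hence "\<forall>s. Mf s = exp (s\<^sup>2/(2*J))" by (simp add: F_def)
    thus False using Mf_not_gauss by blast
  qed
  from powser_isolated_zero[OF sums this] obtain \<epsilon> where e: "\<epsilon> > 0"
    "\<forall>s. 0 < \<bar>s\<bar> \<and> \<bar>s\<bar> < \<epsilon> \<longrightarrow> F s \<noteq> 0" by blast
  show ?thesis
  proof (intro exI[of _ \<epsilon>] conjI allI impI e(1))
    fix s assume "0 < \<bar>s\<bar> \<and> \<bar>s\<bar> < \<epsilon>"
    hence "F s \<noteq> 0" using e by blast
    thus "Mf s < exp (s\<^sup>2/(2*J))" using Mf_le[of s] by (simp add: F_def)
  qed
qed

end



context cw begin

interpretation R: prob_space \<rho> by (rule rho_prob)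
interpretation PP: prob_space P by (rule prob_P)

abbreviation "\<Pi>N N \<equiv> PiM {..<N} (\<lambda>_. P)"
abbreviation "nu N \<equiv> nuU \<rho> J h \<mu> N"

lemma nu_def': "nu N = distr (\<Pi>N N) lborel (\<lambda>\<sigma>. mN N \<sigma> - \<mu>)"
  unfolding nuU_def P_def ..

lemma comp_meas: assumes "i < N" shows "(\<lambda>\<sigma>. \<sigma> i) \<in> borel_measurable (\<Pi>N N)"
proof -
  have "(\<lambda>\<sigma>. \<sigma> i) \<in> \<Pi>N N \<rightarrow>\<^sub>M P" by (rule measurable_component_singleton) (simp add: assms)
  moreover have "(\<lambda>x. x) \<in> borel_measurable P" by (rule meas_P) simp
  ultimately show ?thesis by (rule measurable_compose)
qed

lemma T_meas: "(\<lambda>\<sigma>. mN N \<sigma> - \<mu>) \<in> measurable (\<Pi>N N) lborel"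
proof -
  have "(\<lambda>\<sigma>. (\<Sum>i<N. \<sigma> i) / real N - \<mu>) \<in> borel_measurable (\<Pi>N N)"
    by (intro borel_measurable_diff borel_measurable_divide borel_measurable_sum)
       (auto intro!: comp_meas)
  thus ?thesis unfolding mN_def by simp
qed

lemma nu_prob: "prob_space (nu N)"
  unfolding nu_def' by (intro prob_space.prob_space_distr prob_space_PiM prob_P T_meas)

lemma sets_nu: "sets (nu N) = sets borel"
  unfolding nu_def' by simp

lemma meas_nu: "f \<in> borel_measurable borel \<Longrightarrow> f \<in> borel_measurable (nu N)"
  by (subst measurable_cong_sets[OF sets_nu refl]) assumption

lemma prod_sf: "product_sigma_finite (\<lambda>_::nat. P)"
  unfolding product_sigma_finite_def by (simp add: PP.sigma_finite_measure_axioms)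

lemma exp_prod: assumes "N > 0"
  shows "exp (real N * s * (mN N \<sigma> - \<mu>)) = (\<Prod>i<N. exp (s * (\<sigma> i - \<mu>)))"
proof -
  have "real N * s * (mN N \<sigma> - \<mu>) = (\<Sum>i<N. s * (\<sigma> i - \<mu>))"
    using assms by (simp add: mN_def sum_distrib_left sum_subtractf field_simps)
  thus ?thesis by (simp add: exp_sum)
qed

lemma nu_mgf: assumes "N > 0"
  shows "integrable (nu N) (\<lambda>u. exp (real N * s * u))"
    and "(\<integral>u. exp (real N * s * u) \<partial>nu N) = Mf s ^ N"
proof -
  have eq: "(\<lambda>\<sigma>. exp (real N * s * (mN N \<sigma> - \<mu>))) = (\<lambda>\<sigma>. \<Prod>i\<in>{..<N}. exp (s * (\<sigma> i - \<mu>)))"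
    using exp_prod[OF assms] by auto
  have "integrable (\<Pi>N N) (\<lambda>\<sigma>. \<Prod>i\<in>{..<N}. exp (s * (\<sigma> i - \<mu>)))"
    by (rule product_sigma_finite.product_integrable_prod[OF prod_sf]) (auto intro: Mf_int)
  thus "integrable (nu N) (\<lambda>u. exp (real N * s * u))"
    unfolding nu_def' by (subst integrable_distr_eq[OF T_meas]) (auto simp: eq)
  have "(\<integral>u. exp (real N * s * u) \<partial>nu N) = (\<integral>\<sigma>. exp (real N * s * (mN N \<sigma> - \<mu>)) \<partial>\<Pi>N N)"
    unfolding nu_def' by (rule integral_distr[OF T_meas]) simp
  also have "\<dots> = (\<integral>\<sigma>. (\<Prod>i\<in>{..<N}. exp (s * (\<sigma> i - \<mu>))) \<partial>\<Pi>N N)" by (simp only: eq)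
  also have "\<dots> = (\<Prod>i\<in>{..<N}. Mf s)"
    unfolding Mf_def by (rule product_sigma_finite.product_integral_prod[OF prod_sf]) (auto intro: Mf_int)
  also have "\<dots> = Mf s ^ N" by simp
  finally show "(\<integral>u. exp (real N * s * u) \<partial>nu N) = Mf s ^ N" .
qed

end



context cw begin

interpretation R: prob_space \<rho> by (rule rho_prob)
interpretation PP: prob_space P by (rule prob_P)

lemma T_int: "N > 0 \<Longrightarrow> integrable (nu N) (\<lambda>u. exp (real N * J * u * w))"
  using nu_mgf(1)[of N "J*w"] by (simp add: mult_ac)

lemma T_eq: "N > 0 \<Longrightarrow> (\<integral>u. exp (real N * J * u * w) \<partial>nu N) = Mf (J*w) ^ N"
  using nu_mgf(2)[of N "J*w"] by (simp add: mult_ac)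

lemma T_le: "N > 0 \<Longrightarrow> (\<integral>u. exp (real N * J * u * w) \<partial>nu N) \<le> exp (real N * (J * w\<^sup>2 / 2))"
proof -
  assume N: "N > 0"
  have "Mf (J*w) ^ N \<le> exp ((J*w)\<^sup>2 / (2*J)) ^ N"
    by (intro power_mono Mf_le) (simp add: Mf_pos less_imp_le)
  also have "(J*w)\<^sup>2 / (2*J) = J * w\<^sup>2 / 2" using J_pos by (simp add: power2_eq_square)
  also have "exp (J * w\<^sup>2 / 2) ^ N = exp (real N * (J * w\<^sup>2 / 2))" by (simp only: exp_of_nat_mult)
  finally show ?thesis using N by (simp only: T_eq)
qed

lemma A_int: "N > 0 \<Longrightarrow> integrable (nu N) (\<lambda>u. indicator {-a..a} u * exp (real N * J * u * w))"
  using integrable_mult_indicator[of "{-a..a}" "nu N", OF _ T_int] by (simp add: sets_nu)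

lemma A_nonneg: "0 \<le> (\<integral>u. indicator {-a..a} u * exp (real N * J * u * w) \<partial>nu N)"
  by (rule integral_nonneg_AE) auto

lemma A_le: assumes N: "N > 0" and a: "a \<ge> 0"
  shows "(\<integral>u. indicator {-a..a} u * exp (real N * J * u * w) \<partial>nu N) \<le> exp (real N * J * a * \<bar>w\<bar>)"
proof -
  interpret NU: prob_space "nu N" by (rule nu_prob)
  have "(\<integral>u. indicator {-a..a} u * exp (real N * J * u * w) \<partial>nu N) \<le> (\<integral>u. exp (real N * J * a * \<bar>w\<bar>) \<partial>nu N)"
  proof (rule integral_mono[OF A_int[OF N]])
    show "integrable (nu N) (\<lambda>u. exp (real N * J * a * \<bar>w\<bar>))" by simp
    fix u
    show "indicator {-a..a} u * exp (real N * J * u * w) \<le> exp (real N * J * a * \<bar>w\<bar>)"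
    proof (cases "u \<in> {-a..a}")
      case True
      hence "\<bar>u\<bar> \<le> a" by auto
      have "u * w \<le> a * \<bar>w\<bar>"
        using mult_right_mono[OF \<open>\<bar>u\<bar> \<le> a\<close> abs_ge_zero[of w]] abs_mult[of u w] abs_ge_self[of "u*w"] by linarith
      hence "real N * J * (u * w) \<le> real N * J * (a * \<bar>w\<bar>)"
        using J_pos by (intro mult_left_mono) auto
      thus ?thesis using True by (simp add: mult_ac)
    qed simp
  qed
  thus ?thesis by (simp add: NU.prob_space)
qed

lemma TA_diff: assumes N: "N > 0"
  shows "(\<integral>u. exp (real N * J * u * w) \<partial>nu N) - (\<integral>u. indicator {-a..a} u * exp (real N * J * u * w) \<partial>nu N)
     = (\<integral>u. (1 - indicator {-a..a} u) * exp (real N * J * u * w) \<partial>nu N)"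
  using T_int[OF N] A_int[OF N]
  by (subst Bochner_Integration.integral_diff[symmetric]) (auto simp: left_diff_distrib)

lemma TA_nonneg: "0 \<le> (\<integral>u. (1 - indicator {-a..a} u) * exp (real N * J * u * w) \<partial>nu N)"
  by (rule integral_nonneg_AE) (auto split: split_indicator)

end



context cw begin

lemma mgf_le: "N > 0 \<Longrightarrow> (\<integral>u. exp (real N * s * u) \<partial>nu N) \<le> exp (real N * (s\<^sup>2 / (2*J)))"
proof -
  assume N: "N > 0"
  have "Mf s ^ N \<le> exp (s\<^sup>2 / (2*J)) ^ N"
    by (intro power_mono Mf_le) (simp add: Mf_pos less_imp_le)
  also have "exp (s\<^sup>2 / (2*J)) ^ N = exp (real N * (s\<^sup>2 / (2*J)))" by (simp only: exp_of_nat_mult)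
  finally show ?thesis using N by (simp only: nu_mgf(2))
qed

lemma quad_ineq: assumes a: "a > 0" and w: "\<bar>w\<bar> \<le> a/2" and t: "t = J*a/2" and "\<bar>\<sigma>\<bar> = 1"
  shows "(J*w + \<sigma>*t)\<^sup>2 / (2*J) - t * a \<le> J*w\<^sup>2/2 - J*a\<^sup>2/8"
proof -
  have "(J*w + \<sigma>*t)\<^sup>2 / (2*J) = J*w\<^sup>2/2 + \<sigma>*w*t + \<sigma>\<^sup>2 * t\<^sup>2/(2*J)"
    using J_pos by (simp add: power2_eq_square field_simps)
  moreover have "\<sigma>\<^sup>2 = 1" using \<open>\<bar>\<sigma>\<bar> = 1\<close> power2_abs[of \<sigma>] by simp
  moreover have "t\<^sup>2/(2*J) = J*a\<^sup>2/8" unfolding t using J_pos by (simp add: power2_eq_square field_simps)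
  ultimately have e: "(J*w + \<sigma>*t)\<^sup>2 / (2*J) = J*w\<^sup>2/2 + \<sigma>*w*t + J*a\<^sup>2/8" by simp
  have "\<sigma>*w \<le> a/2" using w \<open>\<bar>\<sigma>\<bar> = 1\<close> abs_mult[of \<sigma> w] abs_ge_self[of "\<sigma>*w"] by simp
  moreover have "0 \<le> t" unfolding t using J_pos a by simp
  ultimately have "\<sigma>*w*t \<le> (a/2)*t" by (intro mult_right_mono)
  moreover have "(a/2)*t = J*a\<^sup>2/4" unfolding t by (simp add: power2_eq_square)
  moreover have "t * a = J*a\<^sup>2/2" unfolding t by (simp add: power2_eq_square)
  ultimately show ?thesis using e by argo
qed

lemma R_small: assumes N: "N > 0" and a: "a > 0" and w: "\<bar>w\<bar> \<le> a/2"
  shows "(\<integral>u. (1 - indicator {-a..a} u) * exp (real N * J * u * w) \<partial>nu N)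
           \<le> 2 * exp (real N * (J*w\<^sup>2/2 - J*a\<^sup>2/8))"
proof -
  define t where "t = J*a/2"
  have t0: "t > 0" using J_pos a by (simp add: t_def)
  let ?R = "\<lambda>u. exp (- (real N * t * a)) * (exp (real N * (J*w + t) * u) + exp (real N * (J*w + (-1)*t) * u))"
  have "(\<integral>u. (1 - indicator {-a..a} u) * exp (real N * J * u * w) \<partial>nu N) \<le> (\<integral>u. ?R u \<partial>nu N)"
  proof (rule integral_mono)
    show "integrable (nu N) (\<lambda>u. (1 - indicator {-a..a} u) * exp (real N * J * u * w))"
      using T_int[OF N] A_int[OF N, of a w]
      by (subst left_diff_distrib, intro Bochner_Integration.integrable_diff) auto
    show "integrable (nu N) ?R"
      by (intro integrable_mult_right Bochner_Integration.integrable_add nu_mgf(1) N)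
    fix u
    show "(1 - indicator {-a..a} u) * exp (real N * J * u * w) \<le> ?R u"
    proof (cases "u \<in> {-a..a}")
      case True thus ?thesis by simp
    next
      case False
      hence "u > a \<or> u < -a" by auto
      thus ?thesis
      proof
        assume "u > a"
        hence "0 \<le> real N * t * (u - a)" using t0 by simp
        hence "real N * J * u * w \<le> - (real N * t * a) + real N * (J*w + t) * u"
          by (simp add: algebra_simps)
        hence "exp (real N * J * u * w) \<le> exp (- (real N * t * a)) * exp (real N * (J*w + t) * u)"
          by (simp add: exp_add[symmetric])
        also have "\<dots> \<le> ?R u" by (simp add: distrib_left)
        finally show ?thesis using False by simp
      next
        assume "u < -a"
        hence "0 \<le> real N * t * (- u - a)" using t0 by simp
        hence "real N * J * u * w \<le> - (real N * t * a) + real N * (J*w + (-1)*t) * u"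
          by (simp add: algebra_simps)
        hence "exp (real N * J * u * w) \<le> exp (- (real N * t * a)) * exp (real N * (J*w + (-1)*t) * u)"
          by (simp add: exp_add[symmetric])
        also have "\<dots> \<le> ?R u" by (simp add: distrib_left)
        finally show ?thesis using False by simp
      qed
    qed
  qed
  also have "(\<integral>u. ?R u \<partial>nu N) = exp (- (real N * t * a)) * ((\<integral>u. exp (real N * (J*w + t) * u) \<partial>nu N)
      + (\<integral>u. exp (real N * (J*w + (-1)*t) * u) \<partial>nu N))"
    using nu_mgf(1)[OF N] by simp
  also have "\<dots> \<le> exp (- (real N * t * a)) * (exp (real N * ((J*w + t)\<^sup>2 / (2*J))) + exp (real N * ((J*w + (-1)*t)\<^sup>2 / (2*J))))"
    by (intro mult_left_mono add_mono mgf_le N) simp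
  also have "\<dots> = exp (real N * ((J*w + 1*t)\<^sup>2 / (2*J) - t*a)) + exp (real N * ((J*w + (-1)*t)\<^sup>2 / (2*J) - t*a))"
    by (simp add: distrib_left exp_add[symmetric] right_diff_distrib mult_ac)
  also have "\<dots> \<le> exp (real N * (J*w\<^sup>2/2 - J*a\<^sup>2/8)) + exp (real N * (J*w\<^sup>2/2 - J*a\<^sup>2/8))"
    by (intro add_mono exp_le_cancel_iff[THEN iffD2] mult_left_mono quad_ineq[OF a w t_def]) auto
  finally show ?thesis by simp
qed

lemma R_large: assumes N: "N > 0" and q: "Mf (J*w) \<le> exp (- d) * exp (J*w\<^sup>2/2)"
  shows "(\<integral>u. (1 - indicator {-a..a} u) * exp (real N * J * u * w) \<partial>nu N)
           \<le> exp (real N * (J*w\<^sup>2/2 - d))"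
proof -
  have "(\<integral>u. (1 - indicator {-a..a} u) * exp (real N * J * u * w) \<partial>nu N) \<le> (\<integral>u. exp (real N * J * u * w) \<partial>nu N)"
  proof (rule integral_mono)
    show "integrable (nu N) (\<lambda>u. (1 - indicator {-a..a} u) * exp (real N * J * u * w))"
      using T_int[OF N] A_int[OF N, of a w]
      by (subst left_diff_distrib, intro Bochner_Integration.integrable_diff) auto
  qed (auto intro: T_int[OF N] split: split_indicator)
  also have "\<dots> = Mf (J*w) ^ N" by (rule T_eq[OF N])
  also have "\<dots> \<le> (exp (- d) * exp (J*w\<^sup>2/2)) ^ N"
    by (intro power_mono q) (simp add: Mf_pos less_imp_le)
  also have "\<dots> = exp (J*w\<^sup>2/2 - d) ^ N" by (simp add: exp_add[symmetric])
  also have "\<dots> = exp (real N * (J*w\<^sup>2/2 - d))" by (simp only: exp_of_nat_mult)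
  finally show ?thesis .
qed

end



context cw begin

lemma param_meas:
  "(\<lambda>w. \<integral>u. indicator {-a..a} u * exp (real N * J * u * w) \<partial>nu N) \<in> borel_measurable lborel"
  "(\<lambda>w. \<integral>u. exp (real N * J * u * w) \<partial>nu N) \<in> borel_measurable lborel"
proof -
  interpret NU: prob_space "nu N" by (rule nu_prob)
  have cong: "lborel \<Otimes>\<^sub>M nu N \<rightarrow>\<^sub>M borel = lborel \<Otimes>\<^sub>M borel \<rightarrow>\<^sub>M (borel :: real measure)"
    by (rule measurable_cong_sets[OF sets_pair_measure_cong[OF refl sets_nu] refl])
  have "(\<lambda>(w,u). indicator {-a..a} u * exp (real N * J * u * w)) \<in> borel_measurable (lborel \<Otimes>\<^sub>M (borel :: real measure))"
    by measurable
  thus "(\<lambda>w. \<integral>u. indicator {-a..a} u * exp (real N * J * u * w) \<partial>nu N) \<in> borel_measurable lborel"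
    by (intro NU.borel_measurable_lebesgue_integral) (simp add: cong)
  have "(\<lambda>(w,u). exp (real N * J * u * w)) \<in> borel_measurable (lborel \<Otimes>\<^sub>M (borel :: real measure))"
    by measurable
  thus "(\<lambda>w. \<integral>u. exp (real N * J * u * w) \<partial>nu N) \<in> borel_measurable lborel"
    by (intro NU.borel_measurable_lebesgue_integral) (simp add: cong)
qed

lemma norm_g: "norm (exp (\<i> * complex_of_real x - complex_of_real y)) = exp (- y)"
  by simp

lemma fixedN:
  assumes N: "N > 0" and B: "0 < B" and a: "0 < a" "a < B/2"
    and d1: "\<forall>w. a/2 \<le> \<bar>w\<bar> \<and> \<bar>w\<bar> \<le> B \<longrightarrow> Mf (J*w) \<le> exp (- \<delta>1) * exp (J*w\<^sup>2/2)"
  shows "cmod ((\<integral>w. exp (\<i> * complex_of_real (r * real N powr \<gamma> * w)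
                               - complex_of_real (real N * J / 2 * w\<^sup>2))
                          * complex_of_real (\<integral>u. indicator {-a..a} u * exp (real N * J * u * w)
                                                 \<partial>(nu N)) \<partial>lborel)
                  - (\<integral>w. indicator {-B..B} w *
                           (exp (\<i> * complex_of_real (r * real N powr \<gamma> * w)
                               - complex_of_real (real N * J / 2 * w\<^sup>2))
                          * complex_of_real (\<integral>u. exp (real N * J * u * w) \<partial>(nu N))) \<partial>lborel))
    \<le> exp (- (real N - 1) * (J * (B\<^sup>2/2 - a*B))) * (\<integral>w. exp (- (J/2) * w\<^sup>2 + (J*a) * \<bar>w\<bar>) \<partial>lborel)
       + 4 * B * exp (- real N * min \<delta>1 (J*a\<^sup>2/8))"
proof -
  define g where "g = (\<lambda>w. exp (\<i> * complex_of_real (r * real N powr \<gamma> * w)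
                               - complex_of_real (real N * J / 2 * w\<^sup>2)))"
  define Af where "Af = (\<lambda>w. \<integral>u. indicator {-a..a} u * exp (real N * J * u * w) \<partial>(nu N))"
  define Tf where "Tf = (\<lambda>w. \<integral>u. exp (real N * J * u * w) \<partial>(nu N))"
  define F1 where "F1 = (\<lambda>w. g w * complex_of_real (Af w))"
  define F2 where "F2 = (\<lambda>w. indicator {-B..B} w * (g w * complex_of_real (Tf w)))"
  define d where "d = B\<^sup>2/2 - a*B"
  define \<delta>2 where "\<delta>2 = min \<delta>1 (J*a\<^sup>2/8)"
  define k where "k = (\<lambda>w. exp (- (J/2) * w\<^sup>2 + (J*a) * \<bar>w\<bar>))"
  define Bd where "Bd = (\<lambda>w. exp (- (real N - 1) * (J * d)) * k w + 2 * exp (- real N * \<delta>2) * indicator {-B..B} w)"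
  have Npos: "real N > 0" using N by simp
  have ng: "norm (g w) = exp (- (real N * J / 2 * w\<^sup>2))" for w unfolding g_def by simp
  have g_meas: "g \<in> borel_measurable lborel" unfolding g_def by measurable
  have Af_meas: "Af \<in> borel_measurable lborel" unfolding Af_def by (rule param_meas)
  have Tf_meas: "Tf \<in> borel_measurable lborel" unfolding Tf_def by (rule param_meas)
  have Af0: "0 \<le> Af w" for w unfolding Af_def by (rule A_nonneg)
  have Af_le: "Af w \<le> exp (real N * J * a * \<bar>w\<bar>)" for w
    unfolding Af_def using a by (intro A_le N) auto
  have Tf0: "0 \<le> Tf w" for w unfolding Tf_def by (rule integral_nonneg_AE) auto
  have Tf_le: "Tf w \<le> exp (real N * (J * w\<^sup>2 / 2))" for w unfolding Tf_def by (rule T_le[OF N])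
  have k_int: "integrable lborel k"
    unfolding k_def using gauss_abs_integrable[of "J/2" "J*a"] J_pos by simp
  have ind_int: "integrable lborel (indicator {-B..B} :: real \<Rightarrow> real)"
    using B by (simp add: integrable_indicator_iff emeasure_lborel_Icc_eq)
  have F1_int: "integrable lborel F1"
  proof (rule Bochner_Integration.integrable_bound[where f="\<lambda>w. exp (- (real N * J/2) * w\<^sup>2 + (real N * J * a) * \<bar>w\<bar>)"])
    show "integrable lborel (\<lambda>w. exp (- (real N * J/2) * w\<^sup>2 + (real N * J * a) * \<bar>w\<bar>))"
      using gauss_abs_integrable[of "real N * J/2" "real N * J * a"] J_pos Npos by simp
    show "F1 \<in> borel_measurable lborel" unfolding F1_def using g_meas Af_meas by measurable
    show "AE w in lborel. norm (F1 w) \<le> norm (exp (- (real N * J/2) * w\<^sup>2 + (real N * J * a) * \<bar>w\<bar>))"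
    proof (rule AE_I2)
      fix w
      have "norm (F1 w) = exp (- (real N * J / 2 * w\<^sup>2)) * Af w"
        unfolding F1_def using Af0[of w] by (simp add: norm_mult ng)
      also have "\<dots> \<le> exp (- (real N * J / 2 * w\<^sup>2)) * exp (real N * J * a * \<bar>w\<bar>)"
        by (intro mult_left_mono Af_le) simp
      also have "\<dots> = exp (- (real N * J/2) * w\<^sup>2 + (real N * J * a) * \<bar>w\<bar>)"
        by (simp add: exp_add[symmetric])
      finally show "norm (F1 w) \<le> norm (exp (- (real N * J/2) * w\<^sup>2 + (real N * J * a) * \<bar>w\<bar>))" by simp
    qed
  qed
  have F2_int: "integrable lborel F2"
  proof (rule Bochner_Integration.integrable_bound[OF ind_int])
    show "F2 \<in> borel_measurable lborel" unfolding F2_def using g_meas Tf_meas by measurable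
    show "AE w in lborel. norm (F2 w) \<le> norm (indicator {-B..B} w :: real)"
    proof (rule AE_I2)
      fix w
      have "norm (g w * complex_of_real (Tf w)) = exp (- (real N * J / 2 * w\<^sup>2)) * Tf w"
        using Tf0[of w] by (simp add: norm_mult ng)
      also have "\<dots> \<le> exp (- (real N * J / 2 * w\<^sup>2)) * exp (real N * (J * w\<^sup>2 / 2))"
        by (intro mult_left_mono Tf_le) simp
      also have "\<dots> = 1" by (simp add: exp_add[symmetric])
      finally have "norm (g w * complex_of_real (Tf w)) \<le> 1" .
      thus "norm (F2 w) \<le> norm (indicator {-B..B} w :: real)"
        unfolding F2_def by (auto simp: indicator_def norm_mult)
    qed
  qed
  have Bd_int: "integrable lborel Bd"
    unfolding Bd_def by (intro Bochner_Integration.integrable_add integrable_mult_right integrable_mult_left k_int ind_int)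
  have pt: "norm (F1 w - F2 w) \<le> Bd w" for w
  proof (cases "w \<in> {-B..B}")
    case True
    define E where "E = exp (- (real N * J / 2 * w\<^sup>2))"
    have E0: "0 \<le> E" unfolding E_def by simp
    define Rw where "Rw = (\<integral>u. (1 - indicator {-a..a} u) * exp (real N * J * u * w) \<partial>nu N)"
    have TA: "Tf w - Af w = Rw" unfolding Tf_def Af_def Rw_def by (rule TA_diff[OF N])
    have Rw0: "0 \<le> Rw" unfolding Rw_def by (rule TA_nonneg)
    have "F1 w - F2 w = g w * complex_of_real (Af w - Tf w)"
      unfolding F1_def F2_def using True by (simp add: algebra_simps)
    moreover have "\<bar>Af w - Tf w\<bar> = Rw" using TA Rw0 by linarith
    ultimately have "norm (F1 w - F2 w) = E * Rw"
      by (simp add: norm_mult ng E_def of_real_diff[symmetric] del: of_real_diff)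
    also have "\<dots> \<le> 2 * exp (- real N * \<delta>2)"
    proof (cases "\<bar>w\<bar> \<le> a/2")
      case True
      have "Rw \<le> 2 * exp (real N * (J*w\<^sup>2/2 - J*a\<^sup>2/8))"
        unfolding Rw_def by (rule R_small[OF N a(1) True])
      hence "E * Rw \<le> E * (2 * exp (real N * (J*w\<^sup>2/2 - J*a\<^sup>2/8)))"
        by (intro mult_left_mono E0)
      also have "\<dots> = 2 * exp (- real N * (J*a\<^sup>2/8))"
        unfolding E_def by (simp add: exp_add[symmetric] algebra_simps)
      also have "\<dots> \<le> 2 * exp (- real N * \<delta>2)"
        unfolding \<delta>2_def using Npos by (simp add: mult_left_mono)
      finally show ?thesis .
    next
      case False
      hence "a/2 \<le> \<bar>w\<bar> \<and> \<bar>w\<bar> \<le> B" using \<open>w \<in> {-B..B}\<close> by auto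
      hence "Mf (J*w) \<le> exp (- \<delta>1) * exp (J*w\<^sup>2/2)" using d1 by blast
      hence "Rw \<le> exp (real N * (J*w\<^sup>2/2 - \<delta>1))"
        unfolding Rw_def by (rule R_large[OF N])
      hence "E * Rw \<le> E * exp (real N * (J*w\<^sup>2/2 - \<delta>1))"
        by (intro mult_left_mono E0)
      also have "\<dots> = exp (- real N * \<delta>1)"
        unfolding E_def by (simp add: exp_add[symmetric] algebra_simps)
      also have "\<dots> \<le> exp (- real N * \<delta>2)"
        unfolding \<delta>2_def using Npos by (simp add: mult_left_mono)
      also have "\<dots> \<le> 2 * exp (- real N * \<delta>2)" by simp
      finally show ?thesis .
    qed
    also have "\<dots> \<le> Bd w" unfolding Bd_def k_def using True by simp
    finally show ?thesis .
  next
    case False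
    hence wB: "B < \<bar>w\<bar>" by auto
    have "norm (F1 w - F2 w) = exp (- (real N * J / 2 * w\<^sup>2)) * Af w"
      unfolding F1_def F2_def using False Af0[of w] by (simp add: norm_mult ng)
    also have "\<dots> \<le> exp (- (real N * J / 2 * w\<^sup>2)) * exp (real N * J * a * \<bar>w\<bar>)"
      by (intro mult_left_mono Af_le) simp
    also have "\<dots> = exp (- (real N * J/2) * w\<^sup>2 + (real N * J * a) * \<bar>w\<bar>)"
      by (simp add: exp_add[symmetric])
    also have "\<dots> \<le> exp (- (real N - 1) * (J * d) + (- (J/2) * w\<^sup>2 + (J*a) * \<bar>w\<bar>))"
    proof (subst exp_le_cancel_iff)
      have sq: "w\<^sup>2 = \<bar>w\<bar>\<^sup>2" by simp
      have "w\<^sup>2/2 - a*\<bar>w\<bar> - d = (\<bar>w\<bar> - B) * ((\<bar>w\<bar> + B)/2 - a)"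
        unfolding d_def by (simp add: power2_eq_square field_simps)
      also have "\<dots> \<ge> 0" using wB a B by (intro mult_nonneg_nonneg) auto
      finally have hd: "d \<le> w\<^sup>2/2 - a*\<bar>w\<bar>" by simp
      have N1: "0 \<le> (real N - 1) * J" using N J_pos by simp
      have "(real N - 1) * J * d \<le> (real N - 1) * J * (w\<^sup>2/2 - a*\<bar>w\<bar>)"
        by (rule mult_left_mono[OF hd N1])
      moreover have "- (real N * J/2) * w\<^sup>2 + (real N * J * a) * \<bar>w\<bar>
          = - ((real N - 1) * J * (w\<^sup>2/2 - a*\<bar>w\<bar>)) + (- (J/2) * w\<^sup>2 + (J*a) * \<bar>w\<bar>)"
        by (simp add: field_simps)
      moreover have "- (real N - 1) * (J * d) = - ((real N - 1) * J * d)" by (simp add: algebra_simps)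
      ultimately show "- (real N * J/2) * w\<^sup>2 + (real N * J * a) * \<bar>w\<bar>
          \<le> - (real N - 1) * (J * d) + (- (J/2) * w\<^sup>2 + (J*a) * \<bar>w\<bar>)" by linarith
    qed
    also have "\<dots> = exp (- (real N - 1) * (J * d)) * k w"
      unfolding k_def by (simp add: exp_add)
    also have "\<dots> \<le> Bd w" unfolding Bd_def by simp
    finally show ?thesis .
  qed
  have "norm ((\<integral>w. F1 w \<partial>lborel) - (\<integral>w. F2 w \<partial>lborel)) = norm (\<integral>w. F1 w - F2 w \<partial>lborel)"
    using F1_int F2_int by (simp add: Bochner_Integration.integral_diff)
  also have "\<dots> \<le> (\<integral>w. Bd w \<partial>lborel)"
    by (rule Bochner_Integration.integral_norm_bound_integral[OF Bochner_Integration.integrable_diff[OF F1_int F2_int] Bd_int pt])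
  also have "(\<integral>w. Bd w \<partial>lborel) = exp (- (real N - 1) * (J * d)) * (\<integral>w. k w \<partial>lborel)
      + 2 * exp (- real N * \<delta>2) * (2 * B)"
    unfolding Bd_def using k_int ind_int B by simp
  finally show ?thesis unfolding F1_def F2_def g_def Af_def Tf_def d_def \<delta>2_def k_def by (simp add: mult_ac)
qed

lemma main_cw:
  "\<exists>Bhat>0. \<forall>B. 0 < B \<and> B < Bhat \<longrightarrow> (\<forall>a. 0 < a \<and> a < B / 2 \<longrightarrow>
           (\<exists>\<delta>>0. \<forall>r \<gamma> :: real. \<exists>C. \<forall>\<^sub>F N in sequentially.
              cmod ((\<integral>w. exp (\<i> * complex_of_real (r * real N powr \<gamma> * w)
                               - complex_of_real (real N * J / 2 * w\<^sup>2))
                          * complex_of_real (\<integral>u. indicator {-a..a} u * exp (real N * J * u * w)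
                                                 \<partial>(nuU \<rho> J h \<mu> N)) \<partial>lborel)
                  - (\<integral>w. indicator {-B..B} w *
                           (exp (\<i> * complex_of_real (r * real N powr \<gamma> * w)
                               - complex_of_real (real N * J / 2 * w\<^sup>2))
                          * complex_of_real (\<integral>u. exp (real N * J * u * w) \<partial>(nuU \<rho> J h \<mu> N))) \<partial>lborel))
              \<le> C * exp (- real N * \<delta>)))"
proof -
  obtain \<epsilon> where e: "\<epsilon> > 0" "\<forall>s. 0 < \<bar>s\<bar> \<and> \<bar>s\<bar> < \<epsilon> \<longrightarrow> Mf s < exp (s\<^sup>2/(2*J))"
    using Mf_isolated by blast
  show ?thesis
  proof (rule exI[of _ "\<epsilon>/J"], intro conjI allI impI)
    show "\<epsilon>/J > 0" using e J_pos by simp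
    fix B a assume B: "0 < B \<and> B < \<epsilon>/J" and a: "0 < a \<and> a < B/2"
    have JB: "J * B < \<epsilon>" using B J_pos by (simp add: field_simps)
    define S where "S = {-B..-a/2} \<union> {a/2..B}"
    define q where "q = (\<lambda>w. Mf (J*w) / exp (J*w\<^sup>2/2))"
    have S_iff: "w \<in> S \<longleftrightarrow> a/2 \<le> \<bar>w\<bar> \<and> \<bar>w\<bar> \<le> B" for w using a unfolding S_def by auto
    have "compact S" unfolding S_def by (intro compact_Un compact_Icc)
    moreover have "S \<noteq> {}" using a B S_iff[of B] by auto
    moreover have "continuous_on S q"
    proof (rule continuous_at_imp_continuous_on, rule ballI)
      fix w
      have "isCont (\<lambda>w. Mf (J*w)) w" by (rule isCont_o2[OF _ Mf_cont]) simp
      thus "isCont q w" unfolding q_def by (intro isCont_divide) auto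
    qed
    ultimately obtain w0 where w0: "w0 \<in> S" "\<forall>y\<in>S. q y \<le> q w0"
      using continuous_attains_sup[of S q] by blast
    have "0 < \<bar>J*w0\<bar> \<and> \<bar>J*w0\<bar> < \<epsilon>"
    proof -
      have "a/2 \<le> \<bar>w0\<bar>" "\<bar>w0\<bar> \<le> B" using w0(1) S_iff by auto
      hence "J * \<bar>w0\<bar> \<le> J * B" using J_pos by simp
      hence "J * \<bar>w0\<bar> < \<epsilon>" using JB by linarith
      moreover have "0 < \<bar>w0\<bar>" using \<open>a/2 \<le> \<bar>w0\<bar>\<close> a by linarith
      hence "0 < J * \<bar>w0\<bar>" using J_pos by simp
      ultimately show ?thesis using J_pos by (simp add: abs_mult)
    qed
    hence "Mf (J*w0) < exp ((J*w0)\<^sup>2/(2*J))" using e by blast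
    also have "(J*w0)\<^sup>2/(2*J) = J*w0\<^sup>2/2" using J_pos by (simp add: power2_eq_square)
    finally have q1: "q w0 < 1" unfolding q_def by simp
    have q0: "q w0 > 0" unfolding q_def by (simp add: Mf_pos)
    define \<delta>1 where "\<delta>1 = - ln (q w0)"
    have d1pos: "\<delta>1 > 0" unfolding \<delta>1_def using q0 q1 by simp
    have expd1: "exp (- \<delta>1) = q w0" unfolding \<delta>1_def using q0 by simp
    have d1: "\<forall>w. a/2 \<le> \<bar>w\<bar> \<and> \<bar>w\<bar> \<le> B \<longrightarrow> Mf (J*w) \<le> exp (- \<delta>1) * exp (J*w\<^sup>2/2)"
    proof (intro allI impI)
      fix w assume "a/2 \<le> \<bar>w\<bar> \<and> \<bar>w\<bar> \<le> B"
      hence "q w \<le> q w0" using w0(2) S_iff by blast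
      hence "Mf (J*w) / exp (J*w\<^sup>2/2) \<le> exp (- \<delta>1)" unfolding q_def expd1 .
      thus "Mf (J*w) \<le> exp (- \<delta>1) * exp (J*w\<^sup>2/2)" by (simp add: divide_le_eq)
    qed
    define dd where "dd = B\<^sup>2/2 - a*B"
    have ddpos: "dd > 0"
    proof -
      have "dd = B * (B/2 - a)" unfolding dd_def by (simp add: power2_eq_square algebra_simps)
      thus ?thesis using a B by simp
    qed
    define \<delta> where "\<delta> = min (J*dd) (min \<delta>1 (J*a\<^sup>2/8))"
    show "\<exists>\<delta>>0. \<forall>r \<gamma> :: real. \<exists>C. \<forall>\<^sub>F N in sequentially.
              cmod ((\<integral>w. exp (\<i> * complex_of_real (r * real N powr \<gamma> * w)
                               - complex_of_real (real N * J / 2 * w\<^sup>2))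
                          * complex_of_real (\<integral>u. indicator {-a..a} u * exp (real N * J * u * w)
                                                 \<partial>(nuU \<rho> J h \<mu> N)) \<partial>lborel)
                  - (\<integral>w. indicator {-B..B} w *
                           (exp (\<i> * complex_of_real (r * real N powr \<gamma> * w)
                               - complex_of_real (real N * J / 2 * w\<^sup>2))
                          * complex_of_real (\<integral>u. exp (real N * J * u * w) \<partial>(nuU \<rho> J h \<mu> N))) \<partial>lborel))
              \<le> C * exp (- real N * \<delta>)"
    proof (rule exI[of _ \<delta>], intro conjI allI)
      show "\<delta> > 0" unfolding \<delta>_def using J_pos ddpos d1pos a by simp
      fix r \<gamma> :: real
      define K where "K = (\<integral>w. exp (- (J/2) * w\<^sup>2 + (J*a) * \<bar>w\<bar>) \<partial>lborel)"
      have K0: "0 \<le> K" unfolding K_def by (rule integral_nonneg_AE) simp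
      show "\<exists>C. \<forall>\<^sub>F N in sequentially.
              cmod ((\<integral>w. exp (\<i> * complex_of_real (r * real N powr \<gamma> * w)
                               - complex_of_real (real N * J / 2 * w\<^sup>2))
                          * complex_of_real (\<integral>u. indicator {-a..a} u * exp (real N * J * u * w)
                                                 \<partial>(nuU \<rho> J h \<mu> N)) \<partial>lborel)
                  - (\<integral>w. indicator {-B..B} w *
                           (exp (\<i> * complex_of_real (r * real N powr \<gamma> * w)
                               - complex_of_real (real N * J / 2 * w\<^sup>2))
                          * complex_of_real (\<integral>u. exp (real N * J * u * w) \<partial>(nuU \<rho> J h \<mu> N))) \<partial>lborel))
              \<le> C * exp (- real N * \<delta>)"
      proof (intro exI[of _ "K * exp (J*dd) + 4*B"] eventually_sequentiallyI[of 1])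
        fix N :: nat assume "1 \<le> N"
        hence N: "N > 0" by simp
        have "\<delta> \<le> J*dd" "\<delta> \<le> min \<delta>1 (J*a\<^sup>2/8)" unfolding \<delta>_def by auto
        have e1: "exp (- (real N - 1) * (J * dd)) \<le> exp (J*dd) * exp (- real N * \<delta>)"
        proof -
          have "- real N * (J*dd) \<le> - real N * \<delta>" using \<open>\<delta> \<le> J*dd\<close> by (simp add: mult_left_mono)
          hence "- (real N - 1) * (J * dd) \<le> J*dd + - real N * \<delta>" by (simp add: algebra_simps)
          thus ?thesis by (simp add: exp_add[symmetric])
        qed
        have e2: "exp (- real N * min \<delta>1 (J*a\<^sup>2/8)) \<le> exp (- real N * \<delta>)"
          using \<open>\<delta> \<le> min \<delta>1 (J*a\<^sup>2/8)\<close> by (simp add: mult_left_mono)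
        have "exp (- (real N - 1) * (J * dd)) * K + 4 * B * exp (- real N * min \<delta>1 (J*a\<^sup>2/8))
              \<le> (exp (J*dd) * exp (- real N * \<delta>)) * K + 4 * B * exp (- real N * \<delta>)"
          using B by (intro add_mono mult_right_mono mult_left_mono e1 e2 K0) auto
        also have "\<dots> = (K * exp (J*dd) + 4*B) * exp (- real N * \<delta>)" by (simp add: algebra_simps)
        finally have fin: "exp (- (real N - 1) * (J * dd)) * K + 4 * B * exp (- real N * min \<delta>1 (J*a\<^sup>2/8))
              \<le> (K * exp (J*dd) + 4*B) * exp (- real N * \<delta>)" .
        show "cmod ((\<integral>w. exp (\<i> * complex_of_real (r * real N powr \<gamma> * w)
                               - complex_of_real (real N * J / 2 * w\<^sup>2))
                          * complex_of_real (\<integral>u. indicator {-a..a} u * exp (real N * J * u * w)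
                                                 \<partial>(nuU \<rho> J h \<mu> N)) \<partial>lborel)
                  - (\<integral>w. indicator {-B..B} w *
                           (exp (\<i> * complex_of_real (r * real N powr \<gamma> * w)
                               - complex_of_real (real N * J / 2 * w\<^sup>2))
                          * complex_of_real (\<integral>u. exp (real N * J * u * w) \<partial>(nuU \<rho> J h \<mu> N))) \<partial>lborel))
              \<le> (K * exp (J*dd) + 4*B) * exp (- real N * \<delta>)"
          using fixedN[OF N _ _ _ d1, of r \<gamma>] B a fin unfolding K_def dd_def by linarith
      qed
    qed
  qed
qed

end

theorem mainTheorem8:
  fixes \<rho> :: "real measure" and J h \<mu> :: real
  assumes rho_sets: "sets \<rho> = sets borel"
    and rho_prob: "prob_space \<rho>"
    and rho_nondeg: "\<forall>c. measure \<rho> {c} \<noteq> 1"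
    and rho_mom: "\<forall>a>0. \<forall>b. integrable \<rho> (\<lambda>x. exp (a * x\<^sup>2 / 2 + b * x))"
    and J_pos: "J > 0"
    and mu_max: "\<forall>x. fCW \<rho> J h x \<le> fCW \<rho> J h \<mu>"
  shows "\<exists>Bhat>0. \<forall>B. 0 < B \<and> B < Bhat \<longrightarrow> (\<forall>a. 0 < a \<and> a < B / 2 \<longrightarrow>
           (\<exists>\<delta>>0. \<forall>r \<gamma> :: real. \<exists>C. \<forall>\<^sub>F N in sequentially.
              cmod ((\<integral>w. exp (\<i> * complex_of_real (r * real N powr \<gamma> * w)
                               - complex_of_real (real N * J / 2 * w\<^sup>2))
                          * complex_of_real (\<integral>u. indicator {-a..a} u * exp (real N * J * u * w)
                                                 \<partial>(nuU \<rho> J h \<mu> N)) \<partial>lborel)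
                  - (\<integral>w. indicator {-B..B} w *
                           (exp (\<i> * complex_of_real (r * real N powr \<gamma> * w)
                               - complex_of_real (real N * J / 2 * w\<^sup>2))
                          * complex_of_real (\<integral>u. exp (real N * J * u * w) \<partial>(nuU \<rho> J h \<mu> N))) \<partial>lborel))
              \<le> C * exp (- real N * \<delta>)))"
proof -
  have "cw \<rho> J h \<mu>"
    using rho_sets rho_prob rho_mom J_pos mu_max by (rule cw.intro)
  thus ?thesis by (rule cw.main_cw)
qed

end
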